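(* Let $D$ be a friendship digraph of order $n$. Then $\bigl(d^-(u)-1\bigr)\bigl(d^-(v)-1\bigr)\leq n-2$ for any two distinct vertices $u$ and $v$ of $D$.
   Context: All digraphs are finite and have neither loops nor parallel arcs (a pair of opposite arcs $(u,v)$ and $(v,u)$ is allowed). $d^-(v)$ is the indegree of $v$. A friendship digraph is a nontrivial digraph (at least two vertices) in which any two distinct vertices have exactly one common out-neighbor. *)

theory Defs
  imports Main
begin

definition digraph :: "'a set \<Rightarrow> ('a \<times> 'a) set \<Rightarrow> bool" where
  "digraph V A \<longleftrightarrow> finite V \<and> A \<subseteq> V \<times> V \<and> (\<forall>v. (v, v) \<notin> A)"

definition out_nbrs :: "('a \<times> 'a) set \<Rightarrow> 'a \<Rightarrow> 'a set" where
  "out_nbrs A u = {w. (u, w) \<in> A}"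

definition indeg :: "'a set \<Rightarrow> ('a \<times> 'a) set \<Rightarrow> 'a \<Rightarrow> nat" where
  "indeg V A v = card {w \<in> V. (w, v) \<in> A}"

definition friendship_digraph :: "'a set \<Rightarrow> ('a \<times> 'a) set \<Rightarrow> bool" where
  "friendship_digraph V A \<longleftrightarrow> digraph V A \<and> card V \<ge> 2 \<and>
     (\<forall>u\<in>V. \<forall>v\<in>V. u \<noteq> v \<longrightarrow>
        (\<exists>!w. w \<in> out_nbrs A u \<and> w \<in> out_nbrs A v))"

end

theory Submission
  imports Defs
begin

lemma fd_uniq:
  assumes "friendship_digraph V A" "x \<in> V" "y \<in> V" "x \<noteq> y"
    "(x,w) \<in> A" "(y,w) \<in> A" "(x,w') \<in> A" "(y,w') \<in> A"
  shows "w = w'"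
  using assms unfolding friendship_digraph_def out_nbrs_def by blast

lemma fd_ex:
  assumes "friendship_digraph V A" "x \<in> V" "y \<in> V" "x \<noteq> y"
  obtains w where "(x,w) \<in> A" "(y,w) \<in> A"
  using assms unfolding friendship_digraph_def out_nbrs_def by blast

theorem lemma2p6:
  fixes V :: "'a set" and A :: "('a \<times> 'a) set"
  assumes "friendship_digraph V A"
    and "u \<in> V" and "v \<in> V" and "u \<noteq> v"
  shows "(int (indeg V A u) - 1) * (int (indeg V A v) - 1) \<le> int (card V) - 2"
proof -
  note fd = assms(1)
  have dg: "finite V" "A \<subseteq> V \<times> V" "\<And>z. (z,z) \<notin> A"
    using fd unfolding friendship_digraph_def digraph_def by auto
  obtain w0 where w0: "(u,w0) \<in> A" "(v,w0) \<in> A" using fd_ex[OF fd assms(2-4)] by blast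
  have "w0 \<noteq> u" "w0 \<noteq> v" "w0 \<in> V" using w0 dg by auto
  hence "{u,v,w0} \<subseteq> V" using assms by auto
  hence "card {u,v,w0} \<le> card V" using dg(1) card_mono by blast
  hence n3: "card V \<ge> 3" using \<open>w0 \<noteq> u\<close> \<open>w0 \<noteq> v\<close> assms(4) by auto
  define Nu where "Nu = {w\<in>V. (w,u)\<in>A}"
  define Nv where "Nv = {w\<in>V. (w,v)\<in>A}"
  define C where "C = Nu \<inter> Nv"
  define X where "X = Nu - C"
  define Y where "Y = Nv - C"
  have a: "indeg V A u = card Nu" and b: "indeg V A v = card Nv"
    unfolding indeg_def Nu_def Nv_def by auto
  have finN: "finite Nu" "finite Nv" using dg(1) unfolding Nu_def Nv_def by auto
  have C1: "card C \<le> 1"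
  proof -
    have "\<forall>x\<in>C. \<forall>y\<in>C. x = y"
    proof (intro ballI, rule ccontr)
      fix x y assume "x \<in> C" "y \<in> C" "x \<noteq> y"
      then show False using fd_uniq[OF fd, of x y u v] assms(4)
        unfolding C_def Nu_def Nv_def by auto
    qed
    thus ?thesis using card_le_Suc0_iff_eq finN unfolding C_def
      by (metis One_nat_def finite_Int)
  qed
  have cX: "int (card X) \<ge> int (card Nu) - 1"
  proof -
    have "card X = card Nu - card (Nu \<inter> C)" unfolding X_def
      using finN by (simp add: card_Diff_subset_Int)
    moreover have "card (Nu \<inter> C) \<le> 1" using C1 unfolding C_def by (simp add: inf_assoc)
    ultimately show ?thesis by linarith
  qed
  have cY: "int (card Y) \<ge> int (card Nv) - 1"
  proof -
    have "card Y = card Nv - card (Nv \<inter> C)" unfolding Y_def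
      using finN by (simp add: card_Diff_subset_Int)
    moreover have "card (Nv \<inter> C) \<le> 1" using C1 unfolding C_def by (simp add: Int_commute Int_left_commute)
    ultimately show ?thesis by linarith
  qed
  define f where "f = (\<lambda>p. THE w. (fst p, w) \<in> A \<and> (snd p, w) \<in> A)"
  have fprop: "(x, f (x,y)) \<in> A \<and> (y, f (x,y)) \<in> A" if "x \<in> X" "y \<in> Y" for x y
  proof -
    have xy: "x \<in> V" "y \<in> V" "x \<noteq> y" using that unfolding X_def Y_def C_def Nu_def Nv_def by auto
    obtain w where w: "(x,w) \<in> A" "(y,w) \<in> A" using fd_ex[OF fd xy] by blast
    have "(THE w. (x, w) \<in> A \<and> (y, w) \<in> A) = w"
      apply (rule the_equality) using w fd_uniq[OF fd xy] by auto
    thus ?thesis using w unfolding f_def by simp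
  qed
  have inj: "inj_on f (X \<times> Y)"
  proof (rule inj_onI, clarify)
    fix x y x' y' assume h: "x \<in> X" "y \<in> Y" "x' \<in> X" "y' \<in> Y" "f (x,y) = f (x',y')"
    have p1: "(x, f (x,y)) \<in> A" "(y, f (x,y)) \<in> A" using fprop[OF h(1,2)] by auto
    have p2: "(x', f (x,y)) \<in> A" "(y', f (x,y)) \<in> A" using fprop[OF h(3,4)] h(5) by auto
    have V': "x \<in> V" "y \<in> V" "x' \<in> V" "y' \<in> V" using h unfolding X_def Y_def Nu_def Nv_def by auto
    have xu: "(x,u) \<in> A" "(x',u) \<in> A" "(y,v) \<in> A" "(y',v) \<in> A"
      using h unfolding X_def Y_def Nu_def Nv_def by auto
    have yu: "(y,u) \<notin> A" using h unfolding Y_def C_def Nu_def Nv_def by auto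
    have xv: "(x,v) \<notin> A" using h unfolding X_def C_def Nu_def Nv_def by auto
    show "x = x' \<and> y = y'"
    proof
      show "x = x'"
      proof (rule ccontr)
        assume "x \<noteq> x'"
        hence "u = f (x,y)" using fd_uniq[OF fd V'(1) V'(3)] xu p1 p2 by blast
        thus False using p1 yu by simp
      qed
      show "y = y'"
      proof (rule ccontr)
        assume "y \<noteq> y'"
        hence "v = f (x,y)" using fd_uniq[OF fd V'(2) V'(4)] xu p1 p2 by blast
        thus False using p1 xv by simp
      qed
    qed
  qed
  have img: "f ` (X \<times> Y) \<subseteq> V - {u,v}"
  proof (rule image_subsetI, clarify)
    fix x y assume h: "x \<in> X" "y \<in> Y"
    have p: "(x, f (x,y)) \<in> A" "(y, f (x,y)) \<in> A" using fprop h by auto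
    have yu: "(y,u) \<notin> A" using h unfolding Y_def C_def Nu_def Nv_def by auto
    have xv: "(x,v) \<notin> A" using h unfolding X_def C_def Nu_def Nv_def by auto
    show "f (x,y) \<in> V - {u,v}" using p dg(2) yu xv by auto
  qed
  have "card (X \<times> Y) \<le> card (V - {u,v})"
    using card_inj_on_le[OF inj img] dg(1) by simp
  hence XY: "card X * card Y \<le> card V - 2"
    using assms by (simp add: card_cartesian_product card_Diff_subset)
  hence XYi: "int (card X) * int (card Y) \<le> int (card V) - 2" using n3
  proof -
    have "int (card X * card Y) \<le> int (card V - 2)" using XY by linarith
    thus ?thesis using n3 by simp
  qed
  show ?thesis
  proof (cases "card Nu = 0 \<or> card Nv = 0")
    case True
    then show ?thesis using n3 unfolding a b by auto
  next
    case False
    have "(int (card Nu) - 1) * (int (card Nv) - 1) \<le> int (card X) * int (card Y)"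
      using False cX cY by (intro mult_mono) auto
    then show ?thesis unfolding a b using XYi by linarith
  qed
qed

end
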